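(* Let $\{\gamma_k\}$ be strictly positive numbers with $\gamma_k\to\infty$, and $\{g_k\}$ probability generating functions. Define $$G_k(z)=k\gamma_k[g_k(e^{-z/k})-e^{-z/k}],\ z\ge0,\qquad \phi_k(z)=k\gamma_k[g_k(1-z/k)-(1-z/k)],\ 0\le z\le k.$$ Then $\{G_k\}$ is uniformly Lipschitz on each bounded interval if and only if $\{\phi_k\}$ is. In this case $\lim_{k\to\infty}|\phi_k(z)-G_k(z)|=0$ uniformly in $z$ on each bounded interval.
   Context: "Uniformly Lipschitz on each bounded interval" means: for each $a\ge0$ there is a constant $L_a$ such that all the functions (for $\phi_k$: all those with $k\ge a$) are $L_a$-Lipschitz on $[0,a]$. *)

theory Defs
  imports "HOL-Probability.Probability"
begin

definition pgf :: "nat pmf \<Rightarrow> real \<Rightarrow> real" where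
  "pgf p s = (\<Sum>j. pmf p j * s ^ j)"

definition G_fun :: "(nat \<Rightarrow> nat pmf) \<Rightarrow> (nat \<Rightarrow> real) \<Rightarrow> nat \<Rightarrow> real \<Rightarrow> real" where
  "G_fun P \<gamma> k z = real k * \<gamma> k * (pgf (P k) (exp (- z / real k)) - exp (- z / real k))"

text \<open>Only meaningful for 0 \<le> z \<le> k.\<close>
definition phi_fun :: "(nat \<Rightarrow> nat pmf) \<Rightarrow> (nat \<Rightarrow> real) \<Rightarrow> nat \<Rightarrow> real \<Rightarrow> real" where
  "phi_fun P \<gamma> k z = real k * \<gamma> k * (pgf (P k) (1 - z / real k) - (1 - z / real k))"

definition unif_lipschitz_G :: "(nat \<Rightarrow> real \<Rightarrow> real) \<Rightarrow> bool" where
  "unif_lipschitz_G F \<longleftrightarrow> (\<forall>a\<ge>0. \<exists>L. \<forall>k. L-lipschitz_on {0..a} (F k))"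

definition unif_lipschitz_phi :: "(nat \<Rightarrow> real \<Rightarrow> real) \<Rightarrow> bool" where
  "unif_lipschitz_phi F \<longleftrightarrow> (\<forall>a\<ge>0. \<exists>L. \<forall>k. real k \<ge> a \<longrightarrow> L-lipschitz_on {0..a} (F k))"

end

theory Submission
  imports Defs
begin

lemma pmf_sums1: "pmf (p::nat pmf) sums 1"
  using sums_infsetsum_nat'[OF pmf_abs_summable[of p UNIV]] infsetsum_pmf_eq_1[of p UNIV] by simp

lemma pgf_summable: assumes "\<bar>s\<bar> \<le> 1" shows "summable (\<lambda>j. pmf p j * s ^ j)"
proof (rule summable_comparison_test[of _ "pmf p"])
  show "\<exists>N. \<forall>n\<ge>N. norm (pmf p n * s ^ n) \<le> pmf p n"
  proof (intro exI allI impI)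
    fix n :: nat
    have "\<bar>s ^ n\<bar> \<le> 1" using assms by (simp add: power_abs power_le_one)
    then show "norm (pmf p n * s ^ n) \<le> pmf p n"
      by (simp add: abs_mult pmf_nonneg mult_left_le)
  qed
  show "summable (pmf p)" using pmf_sums1 by (rule sums_summable)
qed

lemma pow_lip: fixes s t :: real
  assumes "0 \<le> s" "s \<le> 1/2" "0 \<le> t" "t \<le> 1/2"
  shows "\<bar>s ^ j - t ^ j\<bar> \<le> \<bar>s - t\<bar>"
proof (induction j)
  case 0 then show ?case by simp
next
  case (Suc j)
  show ?case
  proof (cases "j = 0")
    case True then show ?thesis by simp
  next
    case False
    have "t ^ j \<le> t ^ 1" using assms False by (intro power_decreasing) auto
    then have tj: "t ^ j \<le> 1/2" using assms by simp
    have eq: "s ^ Suc j - t ^ Suc j = s * (s ^ j - t ^ j) + t ^ j * (s - t)"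
      by (simp add: algebra_simps)
    have a1: "\<bar>s * (s ^ j - t ^ j)\<bar> \<le> 1/2 * \<bar>s - t\<bar>"
      unfolding abs_mult using assms Suc.IH by (intro mult_mono) auto
    have a2: "\<bar>t ^ j * (s - t)\<bar> \<le> 1/2 * \<bar>s - t\<bar>"
      unfolding abs_mult using assms tj by (intro mult_mono) auto
    have "\<bar>s ^ Suc j - t ^ Suc j\<bar> \<le> \<bar>s * (s ^ j - t ^ j)\<bar> + \<bar>t ^ j * (s - t)\<bar>"
      unfolding eq by (rule abs_triangle_ineq)
    also have "\<dots> \<le> 1/2 * \<bar>s - t\<bar> + 1/2 * \<bar>s - t\<bar>" using a1 a2 by (rule add_mono)
    also have "\<dots> = \<bar>s - t\<bar>" by simp
    finally show ?thesis .
  qed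
qed

lemma pgf_lip: assumes "0 \<le> s" "s \<le> 1/2" "0 \<le> t" "t \<le> 1/2"
  shows "\<bar>pgf p s - pgf p t\<bar> \<le> \<bar>s - t\<bar>"
proof -
  have ss: "summable (\<lambda>j. pmf p j * s ^ j)" "summable (\<lambda>j. pmf p j * t ^ j)"
    using assms by (auto intro!: pgf_summable)
  have "pgf p s - pgf p t = (\<Sum>j. pmf p j * s ^ j - pmf p j * t ^ j)"
    unfolding pgf_def using suminf_diff[OF ss] by simp
  also have "\<dots> = (\<Sum>j. pmf p j * (s ^ j - t ^ j))" by (simp add: algebra_simps)
  finally have eq: "pgf p s - pgf p t = (\<Sum>j. pmf p j * (s ^ j - t ^ j))" .
  have sm: "summable (\<lambda>j. pmf p j * \<bar>s - t\<bar>)"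
    using summable_mult2[OF sums_summable[OF pmf_sums1]] by blast
  have bnd: "\<And>j. \<bar>pmf p j * (s ^ j - t ^ j)\<bar> \<le> pmf p j * \<bar>s - t\<bar>"
    using pow_lip[OF assms] by (simp add: abs_mult pmf_nonneg mult_left_mono)
  have sa: "summable (\<lambda>j. \<bar>pmf p j * (s ^ j - t ^ j)\<bar>)"
    by (rule summable_comparison_test[OF _ sm]) (use bnd in auto)
  have "\<bar>pgf p s - pgf p t\<bar> \<le> (\<Sum>j. \<bar>pmf p j * (s ^ j - t ^ j)\<bar>)"
    unfolding eq by (rule summable_rabs[OF sa])
  also have "\<dots> \<le> (\<Sum>j. pmf p j * \<bar>s - t\<bar>)" by (rule suminf_le[OF bnd sa sm])
  also have "\<dots> = \<bar>s - t\<bar>" using sums_mult2[OF pmf_sums1[of p], of "\<bar>s-t\<bar>"] sums_unique by fastforce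
  finally show ?thesis .
qed

lemma exp_lip: fixes a b :: real assumes "0 \<le> a" "0 \<le> b"
  shows "\<bar>exp (-a) - exp (-b)\<bar> \<le> \<bar>a - b\<bar>"
proof -
  have key: "exp (-x) - exp (-y) \<le> y - x" if "0 \<le> x" "x \<le> y" for x y :: real
  proof -
    have "exp (-x) - exp (-y) = exp (-x) * (1 - exp (x - y))" by (simp add: algebra_simps flip: exp_add)
    also have "\<dots> \<le> 1 * (1 - exp (x - y))"
      using that by (intro mult_right_mono) auto
    also have "\<dots> \<le> y - x" unfolding mult_1 using exp_ge_add_one_self[of "x - y"] by linarith
    finally show ?thesis .
  qed
  show ?thesis
  proof (cases "a \<le> b")
    case True then have "exp (-b) \<le> exp (-a)" by simp
    with key[OF assms(1) True] True show ?thesis by simp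
  next
    case False then have "exp (-a) \<le> exp (-b)" by simp
    with key[OF assms(2)] False show ?thesis by simp
  qed
qed

lemma h_lip: fixes c x y :: real assumes "c > 0" "0 \<le> x" "0 \<le> y"
  shows "\<bar>c*(1 - exp (-x/c)) - c*(1 - exp (-y/c))\<bar> \<le> \<bar>x - y\<bar>"
proof -
  have "c*(1 - exp (-x/c)) - c*(1 - exp (-y/c)) = c * (exp (-(y/c)) - exp (-(x/c)))"
    by (simp add: algebra_simps)
  then have "\<bar>c*(1 - exp (-x/c)) - c*(1 - exp (-y/c))\<bar> = c * \<bar>exp (-(x/c)) - exp (-(y/c))\<bar>"
    using assms by (simp add: abs_mult abs_minus_commute)
  also have "\<dots> \<le> c * \<bar>x/c - y/c\<bar>" using assms by (intro mult_left_mono exp_lip) auto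
  also have "\<dots> = \<bar>x - y\<bar>" using assms by (simp add: abs_mult diff_divide_distrib[symmetric])
  finally show ?thesis .
qed

lemma h_range: fixes c x :: real assumes "c > 0" "0 \<le> x"
  shows "0 \<le> c*(1 - exp (-x/c))" "c*(1 - exp (-x/c)) \<le> x" "c*(1 - exp (-x/c)) \<le> c"
proof -
  have "exp (-x/c) \<le> 1" using assms by simp
  then show "0 \<le> c*(1 - exp (-x/c))" using assms by simp
  have "1 + (-x/c) \<le> exp (-x/c)" by (rule exp_ge_add_one_self)
  then have "c*(1 - exp (-x/c)) \<le> c * (x/c)" using assms by (intro mult_left_mono) auto
  then show "c*(1 - exp (-x/c)) \<le> x" using assms by simp
  show "c*(1 - exp (-x/c)) \<le> c" using assms by simp
qed

lemma exp_second: fixes t :: real assumes "0 \<le> t" shows "exp (-t) \<le> 1 - t + t^2"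
proof -
  have "exp (-t) = 1 / exp t" by (simp add: exp_minus field_simps)
  also have "\<dots> \<le> 1 / (1 + t)" using assms exp_ge_add_one_self[of t]
    by (intro divide_left_mono) auto
  also have "\<dots> \<le> 1 - t + t^2"
  proof -
    have "1 \<le> (1 + t) * (1 - t + t^2)" using assms by (simp add: algebra_simps power2_eq_square power3_eq_cube)
    then show ?thesis using assms by (simp add: field_simps)
  qed
  finally show ?thesis .
qed

lemma h_second: fixes c x :: real assumes "c > 0" "0 \<le> x"
  shows "x - c*(1 - exp (-x/c)) \<le> x^2 / c"
proof -
  have "exp (-(x/c)) \<le> 1 - x/c + (x/c)^2" using assms by (intro exp_second) auto
  then have "c * exp (-(x/c)) \<le> c * (1 - x/c + (x/c)^2)" using assms by (intro mult_left_mono) auto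
  moreover have "c * (1 - x/c + (x/c)^2) = c - x + x^2/c" using assms by (simp add: field_simps power2_eq_square)
  ultimately show ?thesis by (simp add: algebra_simps)
qed

lemma ln_lip: fixes a b :: real assumes "1/2 \<le> a" "a \<le> 1" "1/2 \<le> b" "b \<le> 1"
  shows "\<bar>ln a - ln b\<bar> \<le> 2 * \<bar>a - b\<bar>"
proof -
  have key: "ln x - ln y \<le> 2 * (x - y)" if "1/2 \<le> y" "y \<le> x" for x y :: real
  proof -
    have "ln x - ln y = ln (x / y)" using that by (simp add: ln_div)
    also have "\<dots> \<le> x / y - 1" using that by (intro ln_le_minus_one) auto
    also have "\<dots> = (x - y) / y" using that by (simp add: field_simps)
    also have "\<dots> \<le> 2 * (x - y)"
    proof -
      have "(x - y) \<le> 2 * (x - y) * y" using that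
      proof -
        have "(x - y) * 1 \<le> (x - y) * (2 * y)" using that by (intro mult_left_mono) auto
        then show ?thesis by (simp add: algebra_simps)
      qed
      then show ?thesis using that by (simp add: divide_le_eq)
    qed
    finally show ?thesis .
  qed
  show ?thesis
  proof (cases "b \<le> a")
    case True then have "ln b \<le> ln a" using assms by simp
    with key[OF assms(3) True] True show ?thesis by simp
  next
    case False then have "ln a \<le> ln b" using assms by simp
    with key[OF assms(1)] False show ?thesis by simp
  qed
qed


lemma G_eq: assumes "k > 0"
  shows "G_fun P \<gamma> k z = phi_fun P \<gamma> k (real k * (1 - exp (- z / real k)))"
  using assms by (simp add: G_fun_def phi_fun_def)

lemma phi_eq: assumes "k > 0" "w < real k"
  shows "phi_fun P \<gamma> k w = G_fun P \<gamma> k (- real k * ln (1 - w / real k))"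
proof -
  have "1 - w / real k > 0" using assms by (simp add: field_simps)
  then show ?thesis using assms by (simp add: G_fun_def phi_fun_def)
qed

lemma lip_comp:
  fixes f h :: "real \<Rightarrow> real"
  assumes "L-lipschitz_on T f" "\<And>x. x \<in> S \<Longrightarrow> h x \<in> T"
    "\<And>x y. x \<in> S \<Longrightarrow> y \<in> S \<Longrightarrow> \<bar>h x - h y\<bar> \<le> C * \<bar>x - y\<bar>" "0 \<le> C"
  shows "(L * C)-lipschitz_on S (\<lambda>x. f (h x))"
proof (rule lipschitz_onI)
  have L: "0 \<le> L" using assms(1) by (rule lipschitz_on_nonneg)
  then show "0 \<le> L * C" using assms(4) by simp
  fix x y assume xy: "x \<in> S" "y \<in> S"
  have "dist (f (h x)) (f (h y)) \<le> L * dist (h x) (h y)"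
    using assms(1) assms(2)[OF xy(1)] assms(2)[OF xy(2)] by (rule lipschitz_onD)
  also have "\<dots> \<le> L * (C * dist x y)"
    using assms(3)[OF xy] L by (intro mult_left_mono) (auto simp: dist_real_def)
  finally show "dist (f (h x)) (f (h y)) \<le> L * C * dist x y" by (simp add: mult.assoc)
qed

lemma G_zero: "G_fun P \<gamma> 0 = (\<lambda>_. 0)" by (simp add: G_fun_def fun_eq_iff)
lemma phi_zero: "phi_fun P \<gamma> 0 = (\<lambda>_. 0)" by (simp add: phi_fun_def fun_eq_iff)

lemma const_lip: "0 \<le> L \<Longrightarrow> L-lipschitz_on S (\<lambda>_. (0::real))"
  by (rule lipschitz_onI) auto

lemma nat_lt_ceil: fixes a :: real assumes "real k < a" shows "k < nat \<lceil>a\<rceil>"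
  using assms by linarith

lemma dirA:
  assumes "unif_lipschitz_phi (phi_fun P \<gamma>)"
  shows "unif_lipschitz_G (G_fun P \<gamma>)"
  unfolding unif_lipschitz_G_def
proof (intro allI impI)
  fix a :: real assume a: "0 \<le> a"
  from assms a obtain L0 where L0: "\<And>k. real k \<ge> a \<Longrightarrow> L0-lipschitz_on {0..a} (phi_fun P \<gamma> k)"
    unfolding unif_lipschitz_phi_def by blast
  have "\<forall>k. \<exists>L. L-lipschitz_on {0..real k} (phi_fun P \<gamma> k)"
  proof
    fix k :: nat
    from assms obtain L where "\<forall>j. real k \<le> real j \<longrightarrow> L-lipschitz_on {0..real k} (phi_fun P \<gamma> j)"
      unfolding unif_lipschitz_phi_def by (meson of_nat_0_le_iff)
    then show "\<exists>L. L-lipschitz_on {0..real k} (phi_fun P \<gamma> k)" by blast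
  qed
  then obtain Lf where Lf: "\<And>k. (Lf k)-lipschitz_on {0..real k} (phi_fun P \<gamma> k)" by metis
  have L0nn: "0 \<le> L0" using L0[OF real_nat_ceiling_ge] by (rule lipschitz_on_nonneg)
  have Lfnn: "\<And>k. 0 \<le> Lf k" using Lf by (rule lipschitz_on_nonneg)
  define L where "L = L0 + (\<Sum>k<nat \<lceil>a\<rceil>. Lf k)"
  have LL0: "L0 \<le> L" unfolding L_def using Lfnn by (simp add: sum_nonneg)
  have LLf: "Lf k \<le> L" if "k < nat \<lceil>a\<rceil>" for k
  proof -
    have "Lf k \<le> (\<Sum>k<nat \<lceil>a\<rceil>. Lf k)" using that Lfnn by (intro member_le_sum) auto
    then show ?thesis unfolding L_def using L0nn by simp
  qed
  have Lnn: "0 \<le> L" using LL0 L0nn by simp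
  show "\<exists>L. \<forall>k. L-lipschitz_on {0..a} (G_fun P \<gamma> k)"
  proof (intro exI allI)
    fix k :: nat
    consider "k = 0" | "k > 0" "a \<le> real k" | "k > 0" "real k < a" by force
    then show "L-lipschitz_on {0..a} (G_fun P \<gamma> k)"
    proof cases
      case 1 then show ?thesis using Lnn by (simp add: G_zero const_lip)
    next
      case 2
      have kp: "real k > 0" using 2 by simp
      have "(L0 * 1)-lipschitz_on {0..a} (\<lambda>z. phi_fun P \<gamma> k (real k * (1 - exp (- z / real k))))"
      proof (rule lip_comp[OF L0[OF 2(2)]])
        fix x assume "x \<in> {0..a}"
        then show "real k * (1 - exp (- x / real k)) \<in> {0..a}"
          using h_range[OF kp, of x] by auto
      next
        fix x y assume "x \<in> {0..a}" "y \<in> {0..a}"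
        then show "\<bar>real k * (1 - exp (- x / real k)) - real k * (1 - exp (- y / real k))\<bar> \<le> 1 * \<bar>x - y\<bar>"
          using h_lip[OF kp, of x y] by auto
      qed simp
      then have "L0-lipschitz_on {0..a} (G_fun P \<gamma> k)"
        using G_eq[OF 2(1), of P \<gamma>] by simp
      then show ?thesis using LL0 by (rule lipschitz_on_mono[OF _ order_refl])
    next
      case 3
      have kp: "real k > 0" using 3 by simp
      have "(Lf k * 1)-lipschitz_on {0..a} (\<lambda>z. phi_fun P \<gamma> k (real k * (1 - exp (- z / real k))))"
      proof (rule lip_comp[OF Lf])
        fix x assume "x \<in> {0..a}"
        then show "real k * (1 - exp (- x / real k)) \<in> {0..real k}"
          using h_range[OF kp, of x] by auto
      next
        fix x y assume "x \<in> {0..a}" "y \<in> {0..a}"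
        then show "\<bar>real k * (1 - exp (- x / real k)) - real k * (1 - exp (- y / real k))\<bar> \<le> 1 * \<bar>x - y\<bar>"
          using h_lip[OF kp, of x y] by auto
      qed simp
      then have "(Lf k)-lipschitz_on {0..a} (G_fun P \<gamma> k)"
        using G_eq[OF 3(1), of P \<gamma>] by simp
      then show ?thesis using LLf[OF nat_lt_ceil[OF 3(2)]] by (rule lipschitz_on_mono[OF _ order_refl])
    qed
  qed
qed


lemma lip_cong_on: "L-lipschitz_on S f \<Longrightarrow> (\<And>x. x \<in> S \<Longrightarrow> g x = f x) \<Longrightarrow> L-lipschitz_on S g"
  unfolding lipschitz_on_def by auto

lemma u_props:
  fixes c w w' :: real
  assumes c: "c > 0" and w: "0 \<le> w" "w \<le> c/2" and w': "0 \<le> w'" "w' \<le> c/2"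
  shows "0 \<le> - c * ln (1 - w / c)" "- c * ln (1 - w / c) \<le> 2 * w"
    "\<bar>- c * ln (1 - w / c) - (- c * ln (1 - w' / c))\<bar> \<le> 2 * \<bar>w - w'\<bar>"
proof -
  have r: "1/2 \<le> 1 - w/c" "1 - w/c \<le> 1" using c w by (auto simp: field_simps)
  have r': "1/2 \<le> 1 - w'/c" "1 - w'/c \<le> 1" using c w' by (auto simp: field_simps)
  have "ln (1 - w/c) \<le> (1 - w/c) - 1" by (rule ln_le_minus_one) (use r in linarith)
  moreover have "0 \<le> w / c" using c w by simp
  ultimately have "ln (1 - w/c) \<le> 0" by linarith
  then show "0 \<le> - c * ln (1 - w / c)" using c by (simp add: mult_nonneg_nonpos)
  have "\<bar>ln (1 - w/c) - ln 1\<bar> \<le> 2 * \<bar>(1 - w/c) - 1\<bar>" using r by (intro ln_lip) auto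
  then have "- ln (1 - w/c) \<le> 2 * (w / c)" using c w by simp
  then have "c * (- ln (1 - w/c)) \<le> c * (2 * (w / c))" using c by (intro mult_left_mono) auto
  then show "- c * ln (1 - w / c) \<le> 2 * w" using c by simp
  have "\<bar>ln (1 - w/c) - ln (1 - w'/c)\<bar> \<le> 2 * \<bar>(1 - w/c) - (1 - w'/c)\<bar>" using r r' by (intro ln_lip) auto
  then have "c * \<bar>ln (1 - w/c) - ln (1 - w'/c)\<bar> \<le> c * (2 * \<bar>(1 - w/c) - (1 - w'/c)\<bar>)"
    using c by (intro mult_left_mono) auto
  also have "c * (2 * \<bar>(1 - w/c) - (1 - w'/c)\<bar>) = 2 * \<bar>w - w'\<bar>"
  proof -
    have "(1 - w/c) - (1 - w'/c) = (w' - w) / c" by (simp add: diff_divide_distrib)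
    then show ?thesis using c by (simp add: abs_minus_commute)
  qed
  also have "c * \<bar>ln (1 - w/c) - ln (1 - w'/c)\<bar> = \<bar>- c * ln (1 - w / c) - (- c * ln (1 - w' / c))\<bar>"
  proof -
    have "- c * ln (1 - w / c) - (- c * ln (1 - w' / c)) = c * (ln (1 - w'/c) - ln (1 - w/c))"
      by (simp add: algebra_simps)
    then show ?thesis using c by (simp add: abs_mult abs_minus_commute)
  qed
  finally show "\<bar>- c * ln (1 - w / c) - (- c * ln (1 - w' / c))\<bar> \<le> 2 * \<bar>w - w'\<bar>" .
qed

lemma phiA:
  assumes k: "k > 0" and b: "0 \<le> b" "b \<le> real k / 2" and M: "M-lipschitz_on {0..2*b} (G_fun P \<gamma> k)"
  shows "(M * 2)-lipschitz_on {0..b} (phi_fun P \<gamma> k)"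
proof -
  have kp: "real k > 0" using k by simp
  have "(M * 2)-lipschitz_on {0..b} (\<lambda>w. G_fun P \<gamma> k (- real k * ln (1 - w / real k)))"
  proof (rule lip_comp[OF M])
    fix x assume "x \<in> {0..b}"
    then show "- real k * ln (1 - x / real k) \<in> {0..2*b}"
      using u_props(1,2)[OF kp, of x x] b by auto
  next
    fix x y assume "x \<in> {0..b}" "y \<in> {0..b}"
    then show "\<bar>- real k * ln (1 - x / real k) - (- real k * ln (1 - y / real k))\<bar> \<le> 2 * \<bar>x - y\<bar>"
      using u_props(3)[OF kp, of x y] b by auto
  qed simp
  then show ?thesis
  proof (rule lip_cong_on)
    fix x assume "x \<in> {0..b}"
    then have "x < real k" using b kp by auto
    then show "phi_fun P \<gamma> k x = G_fun P \<gamma> k (- real k * ln (1 - x / real k))"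
      by (rule phi_eq[OF k])
  qed
qed

lemma aux2: "(A::real) \<le> B + C \<Longrightarrow> B \<le> C \<Longrightarrow> A \<le> 2 * C" by linarith

lemma phiB:
  assumes k: "k > 0" and g: "0 \<le> \<gamma> k"
  shows "(2 * \<gamma> k)-lipschitz_on {real k / 2 .. real k} (phi_fun P \<gamma> k)"
proof (rule lipschitz_onI)
  show "0 \<le> 2 * \<gamma> k" using g by simp
  fix x y assume xy: "x \<in> {real k / 2 .. real k}" "y \<in> {real k / 2 .. real k}"
  have kp: "real k > 0" using k by simp
  define s where "s = 1 - x / real k"
  define t where "t = 1 - y / real k"
  have st: "0 \<le> s" "s \<le> 1/2" "0 \<le> t" "t \<le> 1/2" using xy kp by (auto simp: s_def t_def field_simps)
  have "phi_fun P \<gamma> k x - phi_fun P \<gamma> k y = real k * \<gamma> k * ((pgf (P k) s - pgf (P k) t) - (s - t))"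
    by (simp add: phi_fun_def s_def t_def algebra_simps)
  then have "\<bar>phi_fun P \<gamma> k x - phi_fun P \<gamma> k y\<bar> = real k * \<gamma> k * \<bar>(pgf (P k) s - pgf (P k) t) - (s - t)\<bar>"
    using kp g by (simp add: abs_mult)
  also have "\<dots> \<le> real k * \<gamma> k * (2 * \<bar>s - t\<bar>)"
  proof (rule mult_left_mono)
    have "\<bar>(pgf (P k) s - pgf (P k) t) - (s - t)\<bar> \<le> \<bar>pgf (P k) s - pgf (P k) t\<bar> + \<bar>s - t\<bar>"
      by (rule abs_triangle_ineq4)
    then show "\<bar>(pgf (P k) s - pgf (P k) t) - (s - t)\<bar> \<le> 2 * \<bar>s - t\<bar>"
      using pgf_lip[OF st, of "P k"] aux2 by blast
    show "0 \<le> real k * \<gamma> k" using g by simp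
  qed
  also have "\<dots> = 2 * \<gamma> k * \<bar>x - y\<bar>"
  proof -
    have "s - t = (y - x) / real k" by (simp add: s_def t_def diff_divide_distrib)
    then show ?thesis using kp by (simp add: abs_minus_commute)
  qed
  finally show "dist (phi_fun P \<gamma> k x) (phi_fun P \<gamma> k y) \<le> 2 * \<gamma> k * dist x y"
    by (simp add: dist_real_def)
qed


lemma dirB:
  assumes pos: "\<And>k. \<gamma> k > 0" and G: "unif_lipschitz_G (G_fun P \<gamma>)"
  shows "unif_lipschitz_phi (phi_fun P \<gamma>)"
  unfolding unif_lipschitz_phi_def
proof (intro allI impI)
  fix a :: real assume a: "0 \<le> a"
  have "\<forall>x. \<exists>L. 0 \<le> x \<longrightarrow> (\<forall>k. L-lipschitz_on {0..x} (G_fun P \<gamma> k))"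
    using G unfolding unif_lipschitz_G_def by blast
  then obtain Lf where Lf: "\<And>x k. 0 \<le> x \<Longrightarrow> (Lf x)-lipschitz_on {0..x} (G_fun P \<gamma> k)" by metis
  have Lfnn: "\<And>x. 0 \<le> x \<Longrightarrow> 0 \<le> Lf x" using Lf lipschitz_on_nonneg by blast
  define L where "L = Lf (2*a) * 2 + (\<Sum>k<nat \<lceil>2*a\<rceil>. Lf (real k) * 2 + 2 * \<gamma> k)"
  have snn: "0 \<le> (\<Sum>k<nat \<lceil>2*a\<rceil>. Lf (real k) * 2 + 2 * \<gamma> k)"
    using Lfnn pos by (intro sum_nonneg) (simp add: less_imp_le)
  have L1: "Lf (2*a) * 2 \<le> L" unfolding L_def using snn by simp
  have L2: "Lf (real k) * 2 + 2 * \<gamma> k \<le> L" if "k < nat \<lceil>2*a\<rceil>" for k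
  proof -
    have "Lf (real k) * 2 + 2 * \<gamma> k \<le> (\<Sum>k<nat \<lceil>2*a\<rceil>. Lf (real k) * 2 + 2 * \<gamma> k)"
      using that Lfnn pos by (intro member_le_sum) (auto simp: less_imp_le)
    then show ?thesis unfolding L_def using Lfnn[of "2*a"] a by simp
  qed
  have Lnn: "0 \<le> L" using L1 Lfnn[of "2*a"] a by simp
  show "\<exists>L. \<forall>k. a \<le> real k \<longrightarrow> L-lipschitz_on {0..a} (phi_fun P \<gamma> k)"
  proof (intro exI allI impI)
    fix k :: nat assume ak: "a \<le> real k"
    consider "k = 0" | "k > 0" "2 * a \<le> real k" | "k > 0" "real k < 2 * a" by force
    then show "L-lipschitz_on {0..a} (phi_fun P \<gamma> k)"
    proof cases
      case 1 then show ?thesis using Lnn by (simp add: phi_zero const_lip)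
    next
      case 2
      have "(Lf (2*a) * 2)-lipschitz_on {0..a} (phi_fun P \<gamma> k)"
        using 2 a by (intro phiA Lf) auto
      then show ?thesis using L1 by (rule lipschitz_on_mono[OF _ order_refl])
    next
      case 3
      define M where "M = Lf (real k) * 2 + 2 * \<gamma> k"
      have Mnn: "0 \<le> M" unfolding M_def using Lfnn[of "real k"] pos[of k] by simp
      have A: "M-lipschitz_on {0..real k / 2} (phi_fun P \<gamma> k)"
      proof -
        have "(Lf (real k) * 2)-lipschitz_on {0..real k / 2} (phi_fun P \<gamma> k)"
          using 3 Lf[of "real k"] by (intro phiA) auto
        then show ?thesis by (rule lipschitz_on_mono[OF _ order_refl]) (use pos[of k] in \<open>simp add: M_def less_imp_le\<close>)
      qed
      have B: "M-lipschitz_on {real k / 2..real k} (phi_fun P \<gamma> k)"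
      proof -
        have "(2 * \<gamma> k)-lipschitz_on {real k / 2..real k} (phi_fun P \<gamma> k)"
          using 3 pos[of k] by (intro phiB) (auto simp: less_imp_le)
        then show ?thesis by (rule lipschitz_on_mono[OF _ order_refl]) (use Lfnn[of "real k"] in \<open>simp add: M_def\<close>)
      qed
      have "M-lipschitz_on {0..real k} (phi_fun P \<gamma> k)"
      proof (rule lipschitz_on_closed_Union[where I = "UNIV :: bool set"
            and U = "\<lambda>b. if b then {0..real k / 2} else {real k / 2..real k}"])
        fix i :: bool assume "i \<in> UNIV"
        show "M-lipschitz_on (if i then {0..real k / 2} else {real k / 2..real k}) (phi_fun P \<gamma> k)"
          using A B by simp
        show "closed (if i then {0..real k / 2} else {real k / 2..real k})" by simp
      next
        show "{0..real k} \<subseteq> (\<Union>b\<in>UNIV. if b then {0..real k / 2} else {real k / 2..real k})"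
        proof
          fix x assume "x \<in> {0..real k}"
          then show "x \<in> (\<Union>b\<in>UNIV. if b then {0..real k / 2} else {real k / 2..real k})"
            by (cases "x \<le> real k / 2") (auto intro: bexI[where x=True] bexI[where x=False])
        qed
      qed (use Mnn in auto)
      then have "M-lipschitz_on {0..a} (phi_fun P \<gamma> k)"
        by (rule lipschitz_on_subset) (use ak in auto)
      then show ?thesis using L2[OF nat_lt_ceil[OF 3(2)]] unfolding M_def
        by (rule lipschitz_on_mono[OF _ order_refl])
    qed
  qed
qed

lemma conv:
  assumes phi: "unif_lipschitz_phi (phi_fun P \<gamma>)" and a: "0 \<le> a"
  shows "uniform_limit {0..a} (\<lambda>k z. \<bar>phi_fun P \<gamma> k z - G_fun P \<gamma> k z\<bar>) (\<lambda>_. 0) sequentially"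
proof -
  from phi a obtain L where L: "\<And>k. a \<le> real k \<Longrightarrow> L-lipschitz_on {0..a} (phi_fun P \<gamma> k)"
    unfolding unif_lipschitz_phi_def by blast
  have Lnn: "0 \<le> L" using L[OF real_nat_ceiling_ge] by (rule lipschitz_on_nonneg)
  show ?thesis
  proof (rule uniform_limitI)
    fix e :: real assume e: "0 < e"
    define N where "N = nat \<lceil>L * a^2 / e\<rceil> + nat \<lceil>a\<rceil> + 1"
    have "\<forall>k\<ge>N. \<forall>z\<in>{0..a}. dist \<bar>phi_fun P \<gamma> k z - G_fun P \<gamma> k z\<bar> 0 < e"
    proof (intro allI impI ballI)
      fix k z assume kN: "N \<le> k" and z: "z \<in> {0..a}"
      have k0: "k > 0" using kN unfolding N_def by simp
      have kp: "real k > 0" using k0 by simp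
      have ak: "a \<le> real k" using kN unfolding N_def by linarith
      have kbig: "L * a^2 / e < real k" using kN unfolding N_def by linarith
      define hz where "hz = real k * (1 - exp (- z / real k))"
      have hz: "hz \<in> {0..a}" using h_range[OF kp, of z] z unfolding hz_def by auto
      have "\<bar>phi_fun P \<gamma> k z - G_fun P \<gamma> k z\<bar> = \<bar>phi_fun P \<gamma> k z - phi_fun P \<gamma> k hz\<bar>"
        using G_eq[OF k0] unfolding hz_def by simp
      also have "\<dots> \<le> L * \<bar>z - hz\<bar>"
        using lipschitz_onD[OF L[OF ak] z hz] by (simp add: dist_real_def)
      also have "\<dots> \<le> L * (a^2 / real k)"
      proof (rule mult_left_mono[OF _ Lnn])
        have "z - hz \<le> z^2 / real k" unfolding hz_def using h_second[OF kp, of z] z by auto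
        also have "\<dots> \<le> a^2 / real k" using z kp by (intro divide_right_mono power_mono) auto
        finally show "\<bar>z - hz\<bar> \<le> a^2 / real k" using h_range(2)[OF kp, of z] z unfolding hz_def by auto
      qed
      also have "\<dots> < e"
      proof -
        have "L * a^2 < e * real k" using kbig e by (simp add: field_simps)
        then show ?thesis using kp by (simp add: field_simps)
      qed
      finally show "dist \<bar>phi_fun P \<gamma> k z - G_fun P \<gamma> k z\<bar> 0 < e" by simp
    qed
    then show "\<forall>\<^sub>F k in sequentially. \<forall>z\<in>{0..a}. dist \<bar>phi_fun P \<gamma> k z - G_fun P \<gamma> k z\<bar> 0 < e"
      unfolding eventually_sequentially by blast
  qed
qed

theorem proposition2p1p1:
  fixes P :: "nat \<Rightarrow> nat pmf" and \<gamma> :: "nat \<Rightarrow> real"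
  assumes pos: "\<And>k. \<gamma> k > 0"
    and lim: "filterlim \<gamma> at_top sequentially"
  shows "(unif_lipschitz_G (G_fun P \<gamma>) \<longleftrightarrow> unif_lipschitz_phi (phi_fun P \<gamma>))
    \<and> (unif_lipschitz_G (G_fun P \<gamma>) \<longrightarrow>
        (\<forall>a\<ge>0. uniform_limit {0..a} (\<lambda>k z. \<bar>phi_fun P \<gamma> k z - G_fun P \<gamma> k z\<bar>) (\<lambda>_. 0) sequentially))"
  using dirA[of P \<gamma>] dirB[of \<gamma> P, OF pos] conv[of P \<gamma>] by blast

end
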